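(* Let $\mathcal{B}$ be a set of data expressions closed under taking sub-expressions, and let $N$ be such that $1\le\mathrm{Card}(\mathcal{B})<N$. Then for every type $\sigma$ with $\mathrm{depth}(\sigma)\le K$ in which exactly $L$ sorts occur (counted with repetitions): $\mathrm{Card}([\![\sigma]\!])<\exp_2^K(N^L)$. Moreover, for $e,u\in[\![\sigma]\!]$, testing whether $e\sqsupseteq u$ takes at most $\exp_2^K(N^{(L+1)^3})$ comparisons between elements of $\mathcal{B}$.
   Context: Types are built from a finite set of sorts by $\sigma ::= \iota \mid \sigma\times\tau \mid \sigma\Rightarrow\tau$. Arrow depth: $\mathrm{depth}(\iota)=0$, $\mathrm{depth}(\sigma\times\tau)=\max(\mathrm{depth}(\sigma),\mathrm{depth}(\tau))$, $\mathrm{depth}(\sigma\Rightarrow\tau)=1+\max(\mathrm{depth}(\sigma),\mathrm{depth}(\tau))$. Data expressions are built from data constructors (each with a type $\kappa_1\Rightarrow\cdots\Rightarrow\kappa_m\Rightarrow\iota$, $\iota$ a sort, arguments of type order $0$, i.e. built only from sorts and products) as $d ::= c\,d_1\cdots d_m \mid (d,d')$, fully applied and well-typed. $\exp_2^0(n)=n$, $\exp_2^{K+1}(n)=2^{\exp_2^K(n)}$. Non-deterministic extensional values: $[\![\iota]\!]=\{d\in\mathcal{B}\mid d:\iota\}$ for sorts $\iota$; $[\![\sigma\times\tau]\!]=[\![\sigma]\!]\times[\![\tau]\!]$; $[\![\sigma\Rightarrow\tau]\!]=\{A_{\sigma\Rightarrow\tau}\mid A\subseteq[\![\sigma]\!]\times[\![\tau]\!]\}$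 (arbitrary relations, tagged with their type). The relation $\sqsupseteq$ on extensional values of the same type: $d\sqsupseteq b$ iff $d=b$ for elements of a sort; $(e_1,e_2)\sqsupseteq(u_1,u_2)$ iff $e_1\sqsupseteq u_1$ and $e_2\sqsupseteq u_2$; $A_\sigma\sqsupseteq B_\sigma$ for functional $\sigma$ iff for every $(e,u)\in B$ there is $u'\sqsupseteq u$ with $(e,u')\in A$. *)

theory Defs
  imports Main "HOL-Library.FSet"
begin

datatype 's ty = Sort 's | Prod "'s ty" "'s ty" | Arr "'s ty" "'s ty"

primrec depth :: "'s ty \<Rightarrow> nat" where
  "depth (Sort _) = 0"
| "depth (Prod s t) = max (depth s) (depth t)"
| "depth (Arr s t) = Suc (max (depth s) (depth t))"

primrec nsorts :: "'s ty \<Rightarrow> nat" where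
  "nsorts (Sort _) = 1"
| "nsorts (Prod s t) = nsorts s + nsorts t"
| "nsorts (Arr s t) = nsorts s + nsorts t"

primrec exp2 :: "nat \<Rightarrow> nat \<Rightarrow> nat" where
  "exp2 0 n = n"
| "exp2 (Suc K) n = 2 ^ exp2 K n"

text \<open>Data expressions: a constructor applied to a list of arguments, or a pair.
  A signature assigns to each constructor c of type k1 => ... => km => iota the pair
  ([k1,...,km], iota).\<close>
datatype 'c dexp = Con 'c "'c dexp list" | DPair "'c dexp" "'c dexp"

inductive dtyped :: "('c \<Rightarrow> 's ty list \<times> 's) \<Rightarrow> 'c dexp \<Rightarrow> 's ty \<Rightarrow> bool"
  for sig where
  con: "sig c = (ks, i) \<Longrightarrow> length ds = length ks \<Longrightarrow>
        (\<forall>j < length ds. dtyped sig (ds ! j) (ks ! j)) \<Longrightarrow> dtyped sig (Con c ds) (Sort i)"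
| pair: "dtyped sig d s \<Longrightarrow> dtyped sig d' t \<Longrightarrow> dtyped sig (DPair d d') (Prod s t)"

fun immsubs :: "'c dexp \<Rightarrow> 'c dexp set" where
  "immsubs (Con c ds) = set ds"
| "immsubs (DPair d d') = {d, d'}"

definition sub_closed :: "'c dexp set \<Rightarrow> bool" where
  "sub_closed B \<longleftrightarrow> (\<forall>d\<in>B. immsubs d \<subseteq> B)"

text \<open>Relations are finite sets (fset); since B is finite, all value sets are finite,
  so this is no restriction.  Relations are tagged with their (functional) type.\<close>
datatype ('c, 's) ev = EBase "'c dexp" | EPair "('c, 's) ev" "('c, 's) ev"
  | ERel "'s ty" "(('c, 's) ev \<times> ('c, 's) ev) fset"

primrec sem :: "('c \<Rightarrow> 's ty list \<times> 's) \<Rightarrow> 'c dexp set \<Rightarrow> 's ty \<Rightarrow> ('c, 's) ev set" where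
  "sem sig B (Sort i) = EBase ` {d \<in> B. dtyped sig d (Sort i)}"
| "sem sig B (Prod s t) = {EPair a b | a b. a \<in> sem sig B s \<and> b \<in> sem sig B t}"
| "sem sig B (Arr s t) = {ERel (Arr s t) A | A. fset A \<subseteq> sem sig B s \<times> sem sig B t}"

text \<open>The relation e \<sqsupseteq> u (for documentation; the theorem concerns the cost of testing it).\<close>
primrec ext_geq :: "'s ty \<Rightarrow> ('c, 's) ev \<Rightarrow> ('c, 's) ev \<Rightarrow> bool" where
  "ext_geq (Sort _) e u = (e = u)"
| "ext_geq (Prod s t) e u = (case (e, u) of (EPair e1 e2, EPair u1 u2) \<Rightarrow>
       ext_geq s e1 u1 \<and> ext_geq t e2 u2 | _ \<Rightarrow> False)"
| "ext_geq (Arr s t) e u = (case (e, u) of (ERel _ A, ERel _ B) \<Rightarrow>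
       (\<forall>p \<in> fset B. \<exists>q \<in> fset A. fst q = fst p \<and> ext_geq t (snd q) (snd p)) | _ \<Rightarrow> False)"

text \<open>Number of comparisons between elements of B performed by the naive test for
  equality of two extensional values of type s (each relation inclusion checked by
  exhaustive search over all pairs).\<close>
primrec eq_cost :: "'s ty \<Rightarrow> ('c, 's) ev \<Rightarrow> ('c, 's) ev \<Rightarrow> nat" where
  "eq_cost (Sort _) e u = 1"
| "eq_cost (Prod s t) e u = (case (e, u) of (EPair e1 e2, EPair u1 u2) \<Rightarrow>
       eq_cost s e1 u1 + eq_cost t e2 u2 | _ \<Rightarrow> 0)"
| "eq_cost (Arr s t) e u = (case (e, u) of (ERel _ A, ERel _ B) \<Rightarrow>
       (\<Sum>p \<in> fset A. \<Sum>q \<in> fset B. eq_cost s (fst p) (fst q) + eq_cost t (snd p) (snd q))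
     + (\<Sum>q \<in> fset B. \<Sum>p \<in> fset A. eq_cost s (fst q) (fst p) + eq_cost t (snd q) (snd p))
     | _ \<Rightarrow> 0)"

text \<open>Number of comparisons between elements of B performed by the naive test of
  e \<sqsupseteq> u: for every (e0,u0) in B and every (e1,u1) in A, test e1 = e0 and u1 \<sqsupseteq> u0.\<close>
primrec geq_cost :: "'s ty \<Rightarrow> ('c, 's) ev \<Rightarrow> ('c, 's) ev \<Rightarrow> nat" where
  "geq_cost (Sort _) e u = 1"
| "geq_cost (Prod s t) e u = (case (e, u) of (EPair e1 e2, EPair u1 u2) \<Rightarrow>
       geq_cost s e1 u1 + geq_cost t e2 u2 | _ \<Rightarrow> 0)"
| "geq_cost (Arr s t) e u = (case (e, u) of (ERel _ A, ERel _ B) \<Rightarrow>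
       (\<Sum>p \<in> fset B. \<Sum>q \<in> fset A. eq_cost s (fst q) (fst p) + geq_cost t (snd q) (snd p))
     | _ \<Rightarrow> 0)"

end

theory Submission
  imports Defs
begin

lemma finite_sem: "finite B \<Longrightarrow> finite (sem sig B \<sigma>)"
proof (induction \<sigma>)
  case (Sort x) then show ?case by simp
next
  case (Prod s t)
  have "sem sig B (Prod s t) = (\<lambda>(a,b). EPair a b) ` (sem sig B s \<times> sem sig B t)" by auto
  then show ?case using Prod by simp
next
  case (Arr s t)
  have "sem sig B (Arr s t) \<subseteq> (\<lambda>X. ERel (Arr s t) (Abs_fset X)) ` Pow (sem sig B s \<times> sem sig B t)"
    by (auto simp: fset_inverse intro!: image_eqI[where x="fset _"])
  then show ?case using Arr by (meson finite_Pow_iff finite_SigmaI finite_imageI finite_subset)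
qed

lemma card_prod: "finite B \<Longrightarrow> card (sem sig B (Prod s t)) = card (sem sig B s) * card (sem sig B t)"
proof -
  have "sem sig B (Prod s t) = (\<lambda>(a,b). EPair a b) ` (sem sig B s \<times> sem sig B t)" by auto
  moreover have "inj_on (\<lambda>(a,b). EPair a b) (sem sig B s \<times> sem sig B t)" by (auto simp: inj_on_def)
  ultimately show ?thesis by (simp add: card_image card_cartesian_product)
qed

lemma card_arr: assumes "finite B"
  shows "card (sem sig B (Arr s t)) = 2 ^ (card (sem sig B s) * card (sem sig B t))"
proof -
  let ?P = "sem sig B s \<times> sem sig B t"
  have fin: "finite ?P" using finite_sem[OF assms, of sig s] finite_sem[OF assms, of sig t] by blast
  have "sem sig B (Arr s t) = (\<lambda>X. ERel (Arr s t) (Abs_fset X)) ` Pow ?P"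
  proof
    show "sem sig B (Arr s t) \<subseteq> (\<lambda>X. ERel (Arr s t) (Abs_fset X)) ` Pow ?P"
      by (auto simp: fset_inverse intro!: image_eqI[where x="fset _"])
    show "(\<lambda>X. ERel (Arr s t) (Abs_fset X)) ` Pow ?P \<subseteq> sem sig B (Arr s t)"
    proof
      fix x assume "x \<in> (\<lambda>X. ERel (Arr s t) (Abs_fset X)) ` Pow ?P"
      then obtain X where X: "X \<subseteq> ?P" "x = ERel (Arr s t) (Abs_fset X)" by auto
      have "finite X" using X fin finite_subset by blast
      then have "fset (Abs_fset X) = X" by (simp add: Abs_fset_inverse)
      then show "x \<in> sem sig B (Arr s t)" using X by auto
    qed
  qed
  moreover have "inj_on (\<lambda>X. ERel (Arr s t) (Abs_fset X)) (Pow ?P)"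
  proof (rule inj_onI)
    fix X Y assume "X \<in> Pow ?P" "Y \<in> Pow ?P" "ERel (Arr s t) (Abs_fset X) = ERel (Arr s t) (Abs_fset Y)"
    then have "finite X" "finite Y" "Abs_fset X = Abs_fset Y" using fin finite_subset by auto
    then show "X = Y" by (metis Abs_fset_inverse mem_Collect_eq)
  qed
  ultimately show ?thesis using fin by (simp add: card_image card_Pow card_cartesian_product)
qed

lemma exp2_ge: "n \<le> exp2 K n"
proof (induction K)
  case 0 then show ?case by simp
next
  case (Suc K)
  have "exp2 K n < 2 ^ exp2 K n" by (rule less_exp)
  then show ?case using Suc by (simp only: exp2.simps)
qed

lemma exp2_mono: "m \<le> n \<Longrightarrow> exp2 K m \<le> exp2 K n"
proof (induction K)
  case 0 then show ?case by simp
next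
  case (Suc K)
  then have "(2::nat) ^ exp2 K m \<le> 2 ^ exp2 K n" by (intro power_increasing) auto
  then show ?case by (simp only: exp2.simps)
qed

lemma exp2_mult: "2 \<le> a \<Longrightarrow> 2 \<le> b \<Longrightarrow> exp2 k a * exp2 k b \<le> exp2 k (a * b)"
proof (induction k)
  case 0 then show ?case by simp
next
  case (Suc k)
  let ?X = "exp2 k a" and ?Y = "exp2 k b"
  have X: "2 \<le> ?X" "2 \<le> ?Y" using exp2_ge[of a k] exp2_ge[of b k] Suc.prems by auto
  have "?X + ?Y \<le> ?X * ?Y"
  proof -
    have "?X + ?Y \<le> 2 * max ?X ?Y" by simp
    also have "\<dots> \<le> min ?X ?Y * max ?X ?Y" using X by (intro mult_right_mono) auto
    also have "\<dots> = ?X * ?Y" by (simp add: max_def min_def)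
    finally show ?thesis .
  qed
  also have "\<dots> \<le> exp2 k (a*b)" using Suc by simp
  finally have "?X + ?Y \<le> exp2 k (a*b)" .
  then have "(2::nat) ^ (?X + ?Y) \<le> 2 ^ exp2 k (a*b)" by (intro power_increasing) auto
  then show ?case by (simp add: power_add)
qed

lemma nsorts_pos: "1 \<le> nsorts \<sigma>"
  by (induction \<sigma>) auto

lemma Npow_ge2: "2 \<le> (N::nat) \<Longrightarrow> 1 \<le> L \<Longrightarrow> 2 \<le> N ^ L"
proof -
  assume a: "2 \<le> N" "1 \<le> L"
  have "N ^ 1 \<le> N ^ L" by (rule power_increasing) (use a in auto)
  then show ?thesis using a by simp
qed

lemma card_bound:
  assumes "finite B" "card B < N" "1 \<le> card B"
  shows "depth \<sigma> \<le> K \<Longrightarrow> card (sem sig B \<sigma>) < exp2 K (N ^ nsorts \<sigma>)"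
proof (induction \<sigma> arbitrary: K)
  case (Sort i)
  have "card (sem sig B (Sort i)) \<le> card B"
  proof -
    have "finite {d \<in> B. dtyped sig d (Sort i)}" using assms(1) by simp
    then have "card (sem sig B (Sort i)) \<le> card {d \<in> B. dtyped sig d (Sort i)}"
      by (simp add: card_image_le)
    also have "\<dots> \<le> card B" using assms(1) by (intro card_mono) auto
    finally show ?thesis .
  qed
  then show ?case using assms exp2_ge[of N K] by simp
next
  case (Prod s t)
  have N2: "2 \<le> N" using assms by simp
  have a: "card (sem sig B s) < exp2 K (N ^ nsorts s)" "card (sem sig B t) < exp2 K (N ^ nsorts t)"
    using Prod by auto
  have "card (sem sig B (Prod s t)) = card (sem sig B s) * card (sem sig B t)"
    using card_prod assms(1) by blast
  also have "\<dots> < exp2 K (N ^ nsorts s) * exp2 K (N ^ nsorts t)"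
    using a by (meson le0 le_less_trans mult_le_mono1 mult_less_mono2 nat_less_le)
  also have "\<dots> \<le> exp2 K (N ^ nsorts s * N ^ nsorts t)"
    using N2 nsorts_pos by (intro exp2_mult Npow_ge2) auto
  finally show ?case by (simp add: power_add)
next
  case (Arr s t)
  then obtain K' where K: "K = Suc K'" "depth s \<le> K'" "depth t \<le> K'" by (cases K) auto
  have N2: "2 \<le> N" using assms by simp
  have a: "card (sem sig B s) < exp2 K' (N ^ nsorts s)" "card (sem sig B t) < exp2 K' (N ^ nsorts t)"
    using Arr K by auto
  have "card (sem sig B s) * card (sem sig B t) < exp2 K' (N ^ nsorts s) * exp2 K' (N ^ nsorts t)"
    using a by (meson le0 le_less_trans mult_le_mono1 mult_less_mono2 nat_less_le)
  also have "\<dots> \<le> exp2 K' (N ^ nsorts s * N ^ nsorts t)"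
    using N2 nsorts_pos by (intro exp2_mult Npow_ge2) auto
  finally have "card (sem sig B s) * card (sem sig B t) < exp2 K' (N ^ nsorts (Arr s t))"
    by (simp add: power_add)
  then have "(2::nat) ^ (card (sem sig B s) * card (sem sig B t)) < 2 ^ exp2 K' (N ^ nsorts (Arr s t))"
    by simp
  then show ?case using card_arr[OF assms(1), of sig s t] K by (simp only: exp2.simps)
qed

primrec costb :: "('c \<Rightarrow> 's ty list \<times> 's) \<Rightarrow> 'c dexp set \<Rightarrow> 's ty \<Rightarrow> nat" where
  "costb sig B (Sort _) = 1"
| "costb sig B (Prod s t) = costb sig B s + costb sig B t"
| "costb sig B (Arr s t) = 2 * (card (sem sig B s) * card (sem sig B t))^2 * (costb sig B s + costb sig B t)"


lemma cost_bound:
  assumes "finite B"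
  shows "e \<in> sem sig B \<sigma> \<Longrightarrow> u \<in> sem sig B \<sigma> \<Longrightarrow>
     eq_cost \<sigma> e u \<le> costb sig B \<sigma> \<and> geq_cost \<sigma> e u \<le> costb sig B \<sigma>"
proof (induction \<sigma> arbitrary: e u)
  case (Sort x) then show ?case by simp
next
  case (Prod s t)
  then obtain e1 e2 u1 u2 where eu: "e = EPair e1 e2" "u = EPair u1 u2"
    "e1 \<in> sem sig B s" "e2 \<in> sem sig B t" "u1 \<in> sem sig B s" "u2 \<in> sem sig B t" by auto
  show ?case using Prod.IH(1)[OF eu(3,5)] Prod.IH(2)[OF eu(4,6)] eu(1,2) by simp
next
  case (Arr s t)
  let ?S = "sem sig B s" and ?T = "sem sig B t"
  let ?c = "card ?S * card ?T"
  let ?C = "costb sig B s + costb sig B t"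
  from Arr.prems obtain A A' where eu: "e = ERel (Arr s t) A" "u = ERel (Arr s t) A'"
    "fset A \<subseteq> ?S \<times> ?T" "fset A' \<subseteq> ?S \<times> ?T" by auto
  have fin: "finite (?S \<times> ?T)" using finite_sem[OF assms, of sig s] finite_sem[OF assms, of sig t] by blast
  have cA: "card (fset A) \<le> ?c" "card (fset A') \<le> ?c"
    using eu(3,4) fin card_mono card_cartesian_product by metis+
  have "(\<Sum>p \<in> fset A. \<Sum>q \<in> fset A'. eq_cost s (fst p) (fst q) + eq_cost t (snd p) (snd q))
        \<le> card (fset A) * (card (fset A') * ?C)"
  proof (rule sum_bounded_above[where K="card (fset A') * ?C", simplified])
    fix p assume p: "p \<in> fset A"
    show "(\<Sum>q \<in> fset A'. eq_cost s (fst p) (fst q) + eq_cost t (snd p) (snd q)) \<le> card (fset A') * ?C"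
    proof (rule sum_bounded_above[where K="?C", simplified])
      fix q assume q: "q \<in> fset A'"
      have "fst p \<in> ?S" "snd p \<in> ?T" "fst q \<in> ?S" "snd q \<in> ?T" using p q eu by auto
      then show "eq_cost s (fst p) (fst q) + eq_cost t (snd p) (snd q) \<le> ?C"
        using Arr.IH by (meson add_le_mono)
    qed
  qed
  also have "\<dots> \<le> ?c * (?c * ?C)" using cA by (intro mult_le_mono) auto
  finally have s1: "(\<Sum>p \<in> fset A. \<Sum>q \<in> fset A'. eq_cost s (fst p) (fst q) + eq_cost t (snd p) (snd q))
        \<le> ?c * (?c * ?C)" .
  have "(\<Sum>q \<in> fset A'. \<Sum>p \<in> fset A. eq_cost s (fst q) (fst p) + eq_cost t (snd q) (snd p))
        \<le> card (fset A') * (card (fset A) * ?C)"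
  proof (rule sum_bounded_above[where K="card (fset A) * ?C", simplified])
    fix q assume q: "q \<in> fset A'"
    show "(\<Sum>p \<in> fset A. eq_cost s (fst q) (fst p) + eq_cost t (snd q) (snd p)) \<le> card (fset A) * ?C"
    proof (rule sum_bounded_above[where K="?C", simplified])
      fix p assume p: "p \<in> fset A"
      have "fst p \<in> ?S" "snd p \<in> ?T" "fst q \<in> ?S" "snd q \<in> ?T" using p q eu by auto
      then show "eq_cost s (fst q) (fst p) + eq_cost t (snd q) (snd p) \<le> ?C"
        using Arr.IH by (meson add_le_mono)
    qed
  qed
  also have "\<dots> \<le> ?c * (?c * ?C)" using cA by (intro mult_le_mono) auto
  finally have s2: "(\<Sum>q \<in> fset A'. \<Sum>p \<in> fset A. eq_cost s (fst q) (fst p) + eq_cost t (snd q) (snd p))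
        \<le> ?c * (?c * ?C)" .
  have "(\<Sum>p \<in> fset A'. \<Sum>q \<in> fset A. eq_cost s (fst q) (fst p) + geq_cost t (snd q) (snd p))
        \<le> card (fset A') * (card (fset A) * ?C)"
  proof (rule sum_bounded_above[where K="card (fset A) * ?C", simplified])
    fix p assume p: "p \<in> fset A'"
    show "(\<Sum>q \<in> fset A. eq_cost s (fst q) (fst p) + geq_cost t (snd q) (snd p)) \<le> card (fset A) * ?C"
    proof (rule sum_bounded_above[where K="?C", simplified])
      fix q assume q: "q \<in> fset A"
      have "fst p \<in> ?S" "snd p \<in> ?T" "fst q \<in> ?S" "snd q \<in> ?T" using p q eu by auto
      then show "eq_cost s (fst q) (fst p) + geq_cost t (snd q) (snd p) \<le> ?C"
        using Arr.IH by (meson add_le_mono)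
    qed
  qed
  also have "\<dots> \<le> ?c * (?c * ?C)" using cA by (intro mult_le_mono) auto
  finally have s3: "(\<Sum>p \<in> fset A'. \<Sum>q \<in> fset A. eq_cost s (fst q) (fst p) + geq_cost t (snd q) (snd p))
        \<le> ?c * (?c * ?C)" .
  have cb: "costb sig B (Arr s t) = 2 * (?c * (?c * ?C))" by (simp add: power2_eq_square)
  have q1: "eq_cost (Arr s t) e u =
     (\<Sum>p \<in> fset A. \<Sum>q \<in> fset A'. eq_cost s (fst p) (fst q) + eq_cost t (snd p) (snd q))
   + (\<Sum>q \<in> fset A'. \<Sum>p \<in> fset A. eq_cost s (fst q) (fst p) + eq_cost t (snd q) (snd p))"
    by (simp only: eu(1,2) eq_cost.simps ev.case prod.case)
  have q2: "geq_cost (Arr s t) e u =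
     (\<Sum>p \<in> fset A'. \<Sum>q \<in> fset A. eq_cost s (fst q) (fst p) + geq_cost t (snd q) (snd p))"
    by (simp only: eu(1,2) geq_cost.simps ev.case prod.case)
  show ?case unfolding cb q1 q2 using s1 s2 s3 by linarith
qed

lemma add_le_mult_nat: "2 \<le> (X::nat) \<Longrightarrow> 2 \<le> Y \<Longrightarrow> X + Y \<le> X * Y"
proof -
  assume X: "2 \<le> X" "2 \<le> Y"
  have "X + Y \<le> 2 * max X Y" by simp
  also have "\<dots> \<le> min X Y * max X Y" using X by (intro mult_right_mono) auto
  also have "\<dots> = X * Y" by (simp add: max_def min_def)
  finally show ?thesis .
qed

lemma double_le_pow: "2 * (n::nat) \<le> 2 ^ n"
proof (induction n)
  case 0 then show ?case by simp
next
  case (Suc n)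
  have "2 \<le> (2::nat) ^ Suc n" by simp
  then show ?case using Suc by (cases n) auto
qed

lemma cube_aux: "(x::nat) \<le> A \<Longrightarrow> y \<le> B \<Longrightarrow> 1 \<le> C \<Longrightarrow>
  2 * (x + y) + (X + 3*P + 3*x + 1) + (Y + 3*Q + 3*y + 1) \<le> X + Y + 1 + 3*A + 3*B + 3*P + 3*Q + 3*x + 3*y + 6*C"
  by presburger

lemma cube_ineq: "1 \<le> (x::nat) \<Longrightarrow> 1 \<le> y \<Longrightarrow> 2 * (x + y) + (x+1)^3 + (y+1)^3 \<le> (x+y+1)^3"
proof -
  assume x: "1 \<le> x" and y: "1 \<le> y"
  have e1: "(x+y+1)^3 = x^3+y^3+1+3*(x^2*y)+3*(x*y^2)+3*x^2+3*y^2+3*x+3*y+6*(x*y)"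
    by (simp add: power3_eq_cube power2_eq_square algebra_simps)
  have e2: "(x+1)^3 = x^3+3*x^2+3*x+1" by (simp add: power3_eq_cube power2_eq_square algebra_simps)
  have e3: "(y+1)^3 = y^3+3*y^2+3*y+1" by (simp add: power3_eq_cube power2_eq_square algebra_simps)
  have h1: "x \<le> x^2*y" using x y by (metis mult_le_mono one_le_power power_one_right power_increasing mult.right_neutral le_refl one_le_numeral le_trans)
  have h2: "y \<le> x*y^2" using x y by (metis mult_le_mono one_le_power power_one_right power_increasing mult_1 le_refl one_le_numeral le_trans)
  have h3: "1 \<le> x*y" using x y by simp
  show ?thesis unfolding e1 e2 e3 by (rule cube_aux[OF h1 h2 h3])
qed

lemma costb_bound:
  assumes "finite B" "card B < N" "1 \<le> card B"
  shows "depth \<sigma> \<le> K \<Longrightarrow> costb sig B \<sigma> \<le> exp2 K (N ^ ((nsorts \<sigma> + 1) ^ 3))"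
proof (induction \<sigma> arbitrary: K)
  case (Sort i)
  have h: "1 \<le> N ^ ((nsorts (Sort i) + 1) ^ 3)" using assms by simp
  show ?case using le_trans[OF h exp2_ge] by (simp only: costb.simps)
next
  case (Prod s t)
  have N2: "2 \<le> N" using assms by simp
  let ?a = "(nsorts s + 1)^3" and ?b = "(nsorts t + 1)^3"
  have g: "2 \<le> exp2 K (N ^ ?a)" "2 \<le> exp2 K (N ^ ?b)"
    using exp2_ge Npow_ge2[OF N2] le_trans by (metis le_add2 one_le_power)+
  have "costb sig B (Prod s t) \<le> exp2 K (N ^ ?a) + exp2 K (N ^ ?b)"
    unfolding costb.simps using Prod.IH Prod.prems by (intro add_le_mono) auto
  also have "\<dots> \<le> exp2 K (N ^ ?a) * exp2 K (N ^ ?b)" using g by (rule add_le_mult_nat)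
  also have "\<dots> \<le> exp2 K (N ^ ?a * N ^ ?b)"
    using N2 by (intro exp2_mult Npow_ge2) auto
  also have "\<dots> \<le> exp2 K (N ^ ((nsorts (Prod s t) + 1) ^ 3))"
  proof (intro exp2_mono)
    have "?a + ?b \<le> (nsorts (Prod s t) + 1) ^ 3"
      using cube_ineq[OF nsorts_pos nsorts_pos, of s t] unfolding nsorts.simps by linarith
    then have "N ^ (?a + ?b) \<le> N ^ ((nsorts (Prod s t) + 1) ^ 3)"
      by (rule power_increasing) (use N2 in simp)
    then show "N ^ ?a * N ^ ?b \<le> N ^ ((nsorts (Prod s t) + 1) ^ 3)"
      by (simp only: power_add)
  qed
  finally show ?case .
next
  case (Arr s t)
  then obtain K' where K: "K = Suc K'" "depth s \<le> K'" "depth t \<le> K'" by (cases K) auto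
  have N2: "2 \<le> N" using assms by simp
  let ?a = "(nsorts s + 1)^3" and ?b = "(nsorts t + 1)^3" and ?L = "nsorts s + nsorts t"
  let ?c = "card (sem sig B s) * card (sem sig B t)"
  have g: "2 \<le> exp2 K' (N ^ ?a)" "2 \<le> exp2 K' (N ^ ?b)" "2 \<le> exp2 K' (N ^ ?L)"
    using exp2_ge Npow_ge2[OF N2] le_trans by (metis le_add2 one_le_power nsorts_pos trans_le_add1)+
  have "costb sig B s + costb sig B t \<le> exp2 K' (N ^ ?a) + exp2 K' (N ^ ?b)"
    using Arr.IH K by (intro add_le_mono) auto
  also have "\<dots> \<le> exp2 K' (N ^ ?a) * exp2 K' (N ^ ?b)" using g by (intro add_le_mult_nat)
  also have "\<dots> \<le> exp2 K' (N ^ ?a * N ^ ?b)"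
    using N2 by (intro exp2_mult Npow_ge2) auto
  finally have C: "costb sig B s + costb sig B t \<le> exp2 K' (N ^ (?a + ?b))" by (simp only: power_add)
  have "depth (Prod s t) \<le> K'" using K by simp
  then have "card (sem sig B (Prod s t)) < exp2 K' (N ^ nsorts (Prod s t))"
    by (rule card_bound[OF assms])
  then have c: "?c \<le> exp2 K' (N ^ ?L)" by (simp only: card_prod[OF assms(1)] nsorts.simps)
  have "?c^2 \<le> exp2 K' (N ^ ?L) * exp2 K' (N ^ ?L)" using mult_le_mono[OF c c] by (simp only: power2_eq_square)
  also have "\<dots> \<le> exp2 K' (N ^ ?L * N ^ ?L)"
    using N2 nsorts_pos[of s] by (intro exp2_mult Npow_ge2) auto
  finally have c2: "?c^2 \<le> exp2 K' (N ^ (2 * ?L))" by (simp only: power_add mult_2)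
  have "?c^2 * (costb sig B s + costb sig B t) \<le> exp2 K' (N ^ (2 * ?L)) * exp2 K' (N ^ (?a + ?b))"
    using c2 C by (rule mult_le_mono)
  also have "\<dots> \<le> exp2 K' (N ^ (2 * ?L) * N ^ (?a + ?b))"
    using N2 nsorts_pos[of s] by (intro exp2_mult Npow_ge2) (auto simp: trans_le_add1)
  also have "\<dots> \<le> exp2 K' (N ^ ((nsorts (Arr s t) + 1) ^ 3))"
  proof (intro exp2_mono)
    have "2 * ?L + (?a + ?b) \<le> (nsorts (Arr s t) + 1) ^ 3"
      using cube_ineq[OF nsorts_pos nsorts_pos, of s t] unfolding nsorts.simps by linarith
    then have "N ^ (2 * ?L + (?a + ?b)) \<le> N ^ ((nsorts (Arr s t) + 1) ^ 3)"
      by (rule power_increasing) (use N2 in simp)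
    then show "N ^ (2 * ?L) * N ^ (?a + ?b) \<le> N ^ ((nsorts (Arr s t) + 1) ^ 3)"
      by (simp only: power_add)
  qed
  finally have Q: "?c^2 * (costb sig B s + costb sig B t) \<le> exp2 K' (N ^ ((nsorts (Arr s t) + 1) ^ 3))" .
  have "costb sig B (Arr s t) = 2 * (?c^2 * (costb sig B s + costb sig B t))"
    by (simp only: costb.simps)
  also have "\<dots> \<le> 2 * exp2 K' (N ^ ((nsorts (Arr s t) + 1) ^ 3))" using Q by simp
  also have "\<dots> \<le> exp2 K (N ^ ((nsorts (Arr s t) + 1) ^ 3))" unfolding K exp2.simps by (rule double_le_pow)
  finally show ?case .
qed

theorem lemma12:
  fixes sig :: "'c \<Rightarrow> ('s::finite) ty list \<times> 's"
    and B :: "'c dexp set" and N K L :: nat and \<sigma> :: "'s ty"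
  assumes "\<forall>c. \<forall>k \<in> set (fst (sig c)). depth k = 0"
    and "\<forall>d \<in> B. \<exists>t. dtyped sig d t"
    and "sub_closed B"
    and "finite B" and "1 \<le> card B" and "card B < N"
    and "depth \<sigma> \<le> K" and "nsorts \<sigma> = L"
  shows "card (sem sig B \<sigma>) < exp2 K (N ^ L)
       \<and> (\<forall>e \<in> sem sig B \<sigma>. \<forall>u \<in> sem sig B \<sigma>. geq_cost \<sigma> e u \<le> exp2 K (N ^ ((L + 1) ^ 3)))"
proof
  show "card (sem sig B \<sigma>) < exp2 K (N ^ L)"
    using card_bound[OF assms(4,6,5) assms(7)] assms(8) by simp
  show "\<forall>e \<in> sem sig B \<sigma>. \<forall>u \<in> sem sig B \<sigma>. geq_cost \<sigma> e u \<le> exp2 K (N ^ ((L + 1) ^ 3))"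
    using cost_bound[OF assms(4)] costb_bound[OF assms(4,6,5) assms(7)] assms(8)
    by (meson le_trans)
qed

end
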